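(* Let $\overrightarrow{W}$ be a Morse sequence on a simplicial complex $K$. Then there exists an arranged Morse sequence $\overrightarrow{V}$ on $K$ such that $\overrightarrow{W}$ and $\overrightarrow{V}$ are equivalent.
   Context: A simplicial complex $K$ is a finite collection of non-empty finite sets closed under taking non-empty subsets; $\dim\sigma=|\sigma|-1$. A pair $(\sigma,\tau)$ with $\sigma\subsetneq\tau$ is a free pair for $K$ if $\tau$ is the only simplex other than $\sigma$ containing $\sigma$; $K$ is then an elementary expansion of $K\setminus\{\sigma,\tau\}$. If $\nu$ is a facet (maximal simplex) of $K$, $K$ is an elementary filling of $K\setminus\{\nu\}$. A Morse sequence on $K$ is a sequence $\langle\emptyset=K_0,\dots,K_k=K\rangle$ with each $K_i$ an elementary expansion or filling of $K_{i-1}$. For each $i$, set $\kappa_i=\nu$ if $K_i=K_{i-1}\cup\{\nu\}$ is a filling ($\nu$ is then critical), and $\kappa_i=(\sigma,\tau)$ if $K_i=K_{i-1}\cup\{\sigma,\tau\}$ is an expansion with $\sigma\subset\tau$ ($(\sigma,\tau)$ is then a regular pair). The dimension of a critical simplex is its dimension; the dimension of a regular pair $(\sigma,\tau)$ is $\dim\tau$. The Morse sequence is arranged if for each $i\in[1,k-1]$: $\dim(\kappa_i)\le\dim(\kappa_{i+1})$, and $\dim(\kappa_i)<\dim(\kappa_{i+1})$ whenever $\kappa_i$ is a critical simplex and $\kappa_{i+1}$ is a regular pair. Two Morse sequences on $K$ are equivalent if they have the same set of regular pairs (gradient vector field). *)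

theory Defs
  imports Main
begin

definition simplicial_complex :: "'a set set \<Rightarrow> bool" where
  "simplicial_complex K \<longleftrightarrow> finite K \<and> (\<forall>\<sigma>\<in>K. finite \<sigma> \<and> \<sigma> \<noteq> {}) \<and>
     (\<forall>\<sigma>\<in>K. \<forall>\<tau>. \<tau> \<subseteq> \<sigma> \<and> \<tau> \<noteq> {} \<longrightarrow> \<tau> \<in> K)"

definition sdim :: "'a set \<Rightarrow> nat" where
  "sdim \<sigma> = card \<sigma> - 1"

definition free_pair :: "'a set set \<Rightarrow> 'a set \<Rightarrow> 'a set \<Rightarrow> bool" where
  "free_pair K \<sigma> \<tau> \<longleftrightarrow> \<sigma> \<in> K \<and> \<tau> \<in> K \<and> \<sigma> \<subset> \<tau> \<and> (\<forall>\<nu>\<in>K. \<sigma> \<subseteq> \<nu> \<longrightarrow> \<nu> = \<sigma> \<or> \<nu> = \<tau>)"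

definition facet :: "'a set set \<Rightarrow> 'a set \<Rightarrow> bool" where
  "facet K \<nu> \<longleftrightarrow> \<nu> \<in> K \<and> (\<forall>\<mu>\<in>K. \<nu> \<subseteq> \<mu> \<longrightarrow> \<mu> = \<nu>)"

datatype 'a kappa = is_Crit: Crit "'a set" | is_Reg: Reg "'a set" "'a set"

text \<open>elem_step L K k: K is an elementary expansion (k = Reg sigma tau) or an
  elementary filling (k = Crit nu) of L.\<close>
fun elem_step :: "'a set set \<Rightarrow> 'a set set \<Rightarrow> 'a kappa \<Rightarrow> bool" where
  "elem_step L K (Reg \<sigma> \<tau>) \<longleftrightarrow> free_pair K \<sigma> \<tau> \<and> L = K - {\<sigma>, \<tau>}"
| "elem_step L K (Crit \<nu>) \<longleftrightarrow> facet K \<nu> \<and> L = K - {\<nu>}"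

fun kdim :: "'a kappa \<Rightarrow> nat" where
  "kdim (Crit \<nu>) = sdim \<nu>"
| "kdim (Reg \<sigma> \<tau>) = sdim \<tau>"

definition morse_sequence :: "'a set set \<Rightarrow> 'a set set list \<Rightarrow> bool" where
  "morse_sequence K Ks \<longleftrightarrow> Ks \<noteq> [] \<and> hd Ks = {} \<and> last Ks = K \<and>
     (\<forall>L\<in>set Ks. simplicial_complex L) \<and>
     (\<forall>i. 0 < i \<and> i < length Ks \<longrightarrow> (\<exists>k. elem_step (Ks ! (i - 1)) (Ks ! i) k))"

definition arranged :: "'a set set list \<Rightarrow> bool" where
  "arranged Ks \<longleftrightarrow> (\<forall>i k k'. 0 < i \<and> i + 1 < length Ks \<and>
      elem_step (Ks ! (i - 1)) (Ks ! i) k \<and> elem_step (Ks ! i) (Ks ! (i + 1)) k' \<longrightarrow>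
      kdim k \<le> kdim k' \<and> (is_Crit k \<and> is_Reg k' \<longrightarrow> kdim k < kdim k'))"

definition regular_pairs :: "'a set set list \<Rightarrow> ('a set \<times> 'a set) set" where
  "regular_pairs Ks = {(\<sigma>, \<tau>). \<exists>i. 0 < i \<and> i < length Ks \<and> elem_step (Ks ! (i - 1)) (Ks ! i) (Reg \<sigma> \<tau>)}"

definition equivalent_morse :: "'a set set list \<Rightarrow> 'a set set list \<Rightarrow> bool" where
  "equivalent_morse W V \<longleftrightarrow> regular_pairs W = regular_pairs V"

end

theory Submission
  imports Defs "HOL-Library.Product_Lexorder"
begin

fun elems :: "'a kappa \<Rightarrow> 'a set set" where
  "elems (Crit \<nu>) = {\<nu>}"
| "elems (Reg \<sigma> \<tau>) = {\<sigma>, \<tau>}"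

fun skey :: "'a kappa \<Rightarrow> nat" where
  "skey (Crit \<nu>) = 2 * card \<nu> + 1"
| "skey (Reg \<sigma> \<tau>) = 2 * card \<tau>"

definition cplx :: "'a kappa list \<Rightarrow> nat \<Rightarrow> 'a set set" where
  "cplx ks n = \<Union> (elems ` set (take n ks))"

definition seqc :: "'a kappa list \<Rightarrow> 'a set set list" where
  "seqc ks = map (cplx ks) [0..<Suc (length ks)]"

definition good :: "'a set set \<Rightarrow> 'a kappa list \<Rightarrow> bool" where
  "good K ks \<longleftrightarrow>
   (\<forall>i<length ks. \<forall>j<length ks. i \<noteq> j \<longrightarrow> elems (ks!i) \<inter> elems (ks!j) = {}) \<and>
   (\<forall>\<sigma> \<tau>. Reg \<sigma> \<tau> \<in> set ks \<longrightarrow> \<sigma> \<subset> \<tau> \<and> card \<tau> = Suc (card \<sigma>)) \<and>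
   (\<forall>i<length ks. \<forall>x\<in>elems (ks!i). \<forall>y. y \<subseteq> x \<and> y \<noteq> {} \<longrightarrow> (\<exists>j\<le>i. y \<in> elems (ks!j))) \<and>
   \<Union>(elems ` set ks) = K"

lemma cplx_mem: "y \<in> cplx ks n \<longleftrightarrow> (\<exists>j<n. j < length ks \<and> y \<in> elems (ks!j))"
proof
  assume "y \<in> cplx ks n"
  then obtain x where x: "x \<in> set (take n ks)" "y \<in> elems x" unfolding cplx_def by blast
  then obtain i where "i < length (take n ks)" "take n ks ! i = x" by (auto simp: in_set_conv_nth)
  then show "\<exists>j<n. j < length ks \<and> y \<in> elems (ks!j)" using x by auto
next
  assume "\<exists>j<n. j < length ks \<and> y \<in> elems (ks!j)"
  then obtain j where j: "j < n" "j < length ks" "y \<in> elems (ks!j)" by blast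
  then have "ks!j \<in> set (take n ks)" by (metis in_set_conv_nth length_take min_less_iff_conj nth_take)
  then show "y \<in> cplx ks n" unfolding cplx_def using j by blast
qed

lemma cplx_Suc: "i < length ks \<Longrightarrow> cplx ks (Suc i) = cplx ks i \<union> elems (ks!i)"
  unfolding cplx_def by (auto simp add: take_Suc_conv_app_nth)

lemma cplx_0: "cplx ks 0 = {}" unfolding cplx_def by simp

lemma cplx_len: "cplx ks (length ks) = \<Union>(elems ` set ks)" unfolding cplx_def by simp

lemma seqc_nth: "j \<le> length ks \<Longrightarrow> seqc ks ! j = cplx ks j"
  unfolding seqc_def by (simp del: upt_Suc add: nth_map)

lemma seqc_len: "length (seqc ks) = Suc (length ks)" unfolding seqc_def by simp

lemma step_elems: "elem_step L M k \<Longrightarrow> elems k \<subseteq> M \<and> L = M - elems k"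
  by (cases k) (auto simp: free_pair_def facet_def)

lemma step_unique: "elem_step L M k \<Longrightarrow> elem_step L M k' \<Longrightarrow> k = k'"
proof -
  assume a: "elem_step L M k" "elem_step L M k'"
  have e: "elems k = elems k'" using step_elems[OF a(1)] step_elems[OF a(2)] by blast
  have w1: "\<sigma> \<noteq> \<tau>" if "k = Reg \<sigma> \<tau>" for \<sigma> \<tau> using a(1) that by (auto simp: free_pair_def)
  have w2: "\<sigma> \<noteq> \<tau>" if "k' = Reg \<sigma> \<tau>" for \<sigma> \<tau> using a(2) that by (auto simp: free_pair_def)
  have w3: "\<sigma> \<subset> \<tau>" if "k = Reg \<sigma> \<tau>" for \<sigma> \<tau> using a(1) that by (auto simp: free_pair_def)
  have w4: "\<sigma> \<subset> \<tau>" if "k' = Reg \<sigma> \<tau>" for \<sigma> \<tau> using a(2) that by (auto simp: free_pair_def)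
  show "k = k'"
  proof (cases k)
    case (Crit x1)
    then show ?thesis
    proof (cases k')
      case (Reg s t)
      then show ?thesis using e Crit w2[OF Reg] by (metis doubleton_eq_iff elems.simps insert_absorb2)
    qed (use e in auto)
  next
    case (Reg x21 x22)
    then show ?thesis
    proof (cases k')
      case (Crit s)
      then show ?thesis using e Reg w1[OF Reg] by (metis doubleton_eq_iff elems.simps insert_absorb2)
    next
      case (Reg s t)
      have "{x21, x22} = {s, t}" using e Reg \<open>k = Reg x21 x22\<close> by simp
      then have "(x21 = s \<and> x22 = t) \<or> (x21 = t \<and> x22 = s)" by (simp add: doubleton_eq_iff)
      then show ?thesis using w3[OF \<open>k = Reg x21 x22\<close>] w4[OF Reg] Reg \<open>k = Reg x21 x22\<close> by auto
    qed
  qed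
qed

lemma fp_card:
  assumes sc: "simplicial_complex M" and fp: "free_pair M \<sigma> \<tau>"
  shows "card \<tau> = Suc (card \<sigma>)"
proof -
  have st: "\<sigma> \<subset> \<tau>" "\<tau> \<in> M" using fp by (auto simp: free_pair_def)
  have ft: "finite \<tau>" using sc st by (auto simp: simplicial_complex_def)
  obtain a where a: "a \<in> \<tau>" "a \<notin> \<sigma>" using st by blast
  have "insert a \<sigma> \<subseteq> \<tau>" using st a by auto
  then have "insert a \<sigma> \<in> M" using sc st(2) unfolding simplicial_complex_def by blast
  moreover have "\<sigma> \<subseteq> insert a \<sigma>" by auto
  ultimately have "insert a \<sigma> = \<tau>" using fp a unfolding free_pair_def by blast
  moreover have "finite \<sigma>" using ft st finite_subset by auto
  ultimately show ?thesis using a by auto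
qed

lemma extract_steps:
  assumes ms: "morse_sequence K W"
  shows "\<exists>ks. W = seqc ks \<and> (\<forall>i<length ks. elem_step (cplx ks i) (cplx ks (Suc i)) (ks!i))"
proof -
  obtain n where n: "length W = Suc n" using ms unfolding morse_sequence_def by (cases W) auto
  have "\<forall>i<n. \<exists>k. elem_step (W!i) (W!Suc i) k"
  proof (intro allI impI)
    fix i assume "i < n"
    then have "0 < Suc i \<and> Suc i < length W" using n by simp
    then show "\<exists>k. elem_step (W!i) (W!Suc i) k" using ms unfolding morse_sequence_def
      by (metis diff_Suc_1)
  qed
  then obtain f where f: "\<And>i. i < n \<Longrightarrow> elem_step (W!i) (W!Suc i) (f i)" by metis
  define ks where "ks = map f [0..<n]"
  have lk: "length ks = n" unfolding ks_def by simp
  have ksi: "i < n \<Longrightarrow> ks!i = f i" for i unfolding ks_def by simp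
  have eq: "i \<le> n \<Longrightarrow> W!i = cplx ks i" for i
  proof (induction i)
    case 0
    have "W!0 = hd W" using n by (cases W) auto
    then show ?case using ms unfolding morse_sequence_def by (simp add: cplx_0)
  next
    case (Suc i)
    then have i: "i < n" by simp
    have "W!Suc i = W!i \<union> elems (f i)" using step_elems[OF f[OF i]] by blast
    then show ?case using Suc i cplx_Suc[of i ks] lk ksi by simp
  qed
  have "W = seqc ks"
    by (rule nth_equalityI) (simp_all add: seqc_len lk n seqc_nth eq)
  moreover have "\<forall>i<length ks. elem_step (cplx ks i) (cplx ks (Suc i)) (ks!i)"
    using f eq lk ksi by (metis Suc_leI less_imp_le_nat)
  ultimately show ?thesis by blast
qed

lemma good_of:
  assumes sc: "simplicial_complex K" and ms: "morse_sequence K (seqc ks)"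
    and st: "\<forall>i<length ks. elem_step (cplx ks i) (cplx ks (Suc i)) (ks!i)"
  shows "good K ks"
proof -
  have scn: "simplicial_complex (cplx ks i)" if "i \<le> length ks" for i
  proof -
    have "i < length (seqc ks)" using that seqc_len[of ks] by simp
    then have "cplx ks i \<in> set (seqc ks)" using nth_mem[of i "seqc ks"] seqc_nth[OF that] by simp
    then show ?thesis using ms unfolding morse_sequence_def by blast
  qed
  have disj0: "elems (ks!i) \<inter> cplx ks i = {}" if "i < length ks" for i
    using step_elems[OF st[rule_format, OF that]] by blast
  have P1: "\<forall>i<length ks. \<forall>j<length ks. i \<noteq> j \<longrightarrow> elems (ks!i) \<inter> elems (ks!j) = {}"
  proof (intro allI impI)
    fix i j assume ij: "i < length ks" "j < length ks" "i \<noteq> j"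
    show "elems (ks!i) \<inter> elems (ks!j) = {}"
    proof (cases "i < j")
      case True
      have "elems (ks!i) \<subseteq> cplx ks j" using True ij cplx_mem[of _ ks j] by blast
      then show ?thesis using disj0[OF ij(2)] by blast
    next
      case False
      then have "j < i" using ij by simp
      then have "elems (ks!j) \<subseteq> cplx ks i" using ij cplx_mem[of _ ks i] by blast
      then show ?thesis using disj0[OF ij(1)] by blast
    qed
  qed
  have P3: "\<forall>\<sigma> \<tau>. Reg \<sigma> \<tau> \<in> set ks \<longrightarrow> \<sigma> \<subset> \<tau> \<and> card \<tau> = Suc (card \<sigma>)"
  proof (intro allI impI)
    fix \<sigma> \<tau> assume "Reg \<sigma> \<tau> \<in> set ks"
    then obtain i where i: "i < length ks" "ks!i = Reg \<sigma> \<tau>" by (auto simp: in_set_conv_nth)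
    then have "elem_step (cplx ks i) (cplx ks (Suc i)) (Reg \<sigma> \<tau>)" using st by metis
    then have fp: "free_pair (cplx ks (Suc i)) \<sigma> \<tau>" by simp
    then show "\<sigma> \<subset> \<tau> \<and> card \<tau> = Suc (card \<sigma>)"
      using fp_card[OF scn fp] i by (simp add: free_pair_def)
  qed
  have P4: "\<forall>i<length ks. \<forall>x\<in>elems (ks!i). \<forall>y. y \<subseteq> x \<and> y \<noteq> {} \<longrightarrow> (\<exists>j\<le>i. y \<in> elems (ks!j))"
  proof (intro allI impI ballI)
    fix i x y assume i: "i < length ks" and x: "x \<in> elems (ks!i)" and y: "y \<subseteq> x \<and> y \<noteq> {}"
    have "x \<in> cplx ks (Suc i)" using i x by (auto simp: cplx_Suc)
    moreover have "simplicial_complex (cplx ks (Suc i))" using scn[of "Suc i"] i by simp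
    ultimately have "y \<in> cplx ks (Suc i)" using y unfolding simplicial_complex_def by blast
    then obtain j where "j < Suc i" "y \<in> elems (ks!j)" using cplx_mem[of y ks "Suc i"] by blast
    then show "\<exists>j\<le>i. y \<in> elems (ks!j)" using less_Suc_eq_le by blast
  qed
  have "K = last (seqc ks)" using ms unfolding morse_sequence_def by simp
  also have "\<dots> = cplx ks (length ks)" by (simp add: seqc_def)
  finally have "\<Union>(elems ` set ks) = K" by (simp add: cplx_len)
  then show ?thesis using P1 P3 P4 unfolding good_def by blast
qed

lemma good_valid:
  assumes sc: "simplicial_complex K" and g: "good K ks"
  shows "morse_sequence K (seqc ks)"
    and "\<forall>i<length ks. \<forall>k. elem_step (cplx ks i) (cplx ks (Suc i)) k \<longleftrightarrow> k = ks!i"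
proof -
  have G: "(\<forall>i<length ks. \<forall>j<length ks. i \<noteq> j \<longrightarrow> elems (ks!i) \<inter> elems (ks!j) = {}) \<and>
   (\<forall>\<sigma> \<tau>. Reg \<sigma> \<tau> \<in> set ks \<longrightarrow> \<sigma> \<subset> \<tau> \<and> card \<tau> = Suc (card \<sigma>)) \<and>
   (\<forall>i<length ks. \<forall>x\<in>elems (ks!i). \<forall>y. y \<subseteq> x \<and> y \<noteq> {} \<longrightarrow> (\<exists>j\<le>i. y \<in> elems (ks!j))) \<and>
   \<Union>(elems ` set ks) = K" using g unfolding good_def by assumption
  have P1: "\<And>i j. i<length ks \<Longrightarrow> j<length ks \<Longrightarrow> i \<noteq> j \<Longrightarrow> elems (ks!i) \<inter> elems (ks!j) = {}"
    using G[THEN conjunct1] by blast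
  have P3: "\<And>\<sigma> \<tau>. Reg \<sigma> \<tau> \<in> set ks \<Longrightarrow> \<sigma> \<subset> \<tau> \<and> card \<tau> = Suc (card \<sigma>)"
    using G[THEN conjunct2, THEN conjunct1] by blast
  have P4: "\<And>i x y. i<length ks \<Longrightarrow> x\<in>elems (ks!i) \<Longrightarrow> y \<subseteq> x \<Longrightarrow> y \<noteq> {} \<Longrightarrow> (\<exists>j\<le>i. y \<in> elems (ks!j))"
    using G[THEN conjunct2, THEN conjunct2, THEN conjunct1] by blast
  have U: "\<Union>(elems ` set ks) = K"
    using G[THEN conjunct2, THEN conjunct2, THEN conjunct2] by blast
  have inK: "elems (ks!i) \<subseteq> K" if "i < length ks" for i using U that nth_mem by blast
  have Kne: "\<And>x. x \<in> K \<Longrightarrow> finite x \<and> x \<noteq> {}" using sc unfolding simplicial_complex_def by blast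
  have sub: "cplx ks n \<subseteq> K" for n using inK cplx_mem[of _ ks n] by blast
  have scn: "simplicial_complex (cplx ks n)" for n
    unfolding simplicial_complex_def
  proof (intro conjI ballI allI impI)
    have "finite K" using sc by (simp add: simplicial_complex_def)
    then show "finite (cplx ks n)" using sub finite_subset by blast
  next
    fix \<sigma> assume "\<sigma> \<in> cplx ks n" then have "\<sigma> \<in> K" using sub by blast
    then show "finite \<sigma>" "\<sigma> \<noteq> {}" using Kne by simp_all
  next
    fix \<sigma> \<tau> assume a: "\<sigma> \<in> cplx ks n" "\<tau> \<subseteq> \<sigma> \<and> \<tau> \<noteq> {}"
    then obtain i where i: "i < n" "i < length ks" "\<sigma> \<in> elems (ks!i)" using cplx_mem by blast
    then obtain j where "j \<le> i" "\<tau> \<in> elems (ks!j)" using P4 a by blast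
    then show "\<tau> \<in> cplx ks n" using i cplx_mem[of \<tau> ks n] by auto
  qed
  have notprev: "elems (ks!i) \<inter> cplx ks i = {}" if "i < length ks" for i
  proof -
    { fix y assume "y \<in> elems (ks!i)" "y \<in> cplx ks i"
      then obtain j where "j < i" "y \<in> elems (ks!j)" using cplx_mem by blast
      then have False using P1[of i j] that \<open>y \<in> elems (ks!i)\<close> by auto }
    then show ?thesis by blast
  qed
  have super: "\<mu> \<in> elems (ks!i)"
    if i: "i < length ks" and y: "y \<in> elems (ks!i)" and mu: "\<mu> \<in> cplx ks (Suc i)" and ym: "y \<subseteq> \<mu>"
    for i y \<mu>
  proof -
    obtain j where j: "j < Suc i" "j < length ks" "\<mu> \<in> elems (ks!j)" using mu cplx_mem by blast
    show ?thesis
    proof (cases "j = i")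
      case True then show ?thesis using j by simp
    next
      case False
      then have ji: "j < i" using j by simp
      have "y \<noteq> {}" using Kne inK[OF i] y by blast
      then obtain j' where "j' \<le> j" "y \<in> elems (ks!j')" using P4[OF j(2) j(3) ym] by blast
      then have False using P1[of i j'] i y ji by auto
      then show ?thesis ..
    qed
  qed
  have step: "elem_step (cplx ks i) (cplx ks (Suc i)) (ks!i)" if i: "i < length ks" for i
  proof (cases "ks!i")
    case (Crit \<nu>)
    have M: "cplx ks (Suc i) = cplx ks i \<union> {\<nu>}" using cplx_Suc[OF i] Crit by simp
    have "\<nu> \<notin> cplx ks i" using notprev[OF i] Crit by auto
    moreover have "facet (cplx ks (Suc i)) \<nu>"
      unfolding facet_def using super[OF i, of \<nu>] Crit M by auto
    ultimately show ?thesis using Crit M by auto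
  next
    case (Reg \<sigma> \<tau>)
    have M: "cplx ks (Suc i) = cplx ks i \<union> {\<sigma>, \<tau>}" using cplx_Suc[OF i] Reg by simp
    have "\<sigma> \<notin> cplx ks i" "\<tau> \<notin> cplx ks i" using notprev[OF i] Reg by auto
    moreover have "\<sigma> \<subset> \<tau>" using P3[of \<sigma> \<tau>] Reg i nth_mem by metis
    moreover have "free_pair (cplx ks (Suc i)) \<sigma> \<tau>"
      unfolding free_pair_def using super[OF i, of \<sigma>] Reg M \<open>\<sigma> \<subset> \<tau>\<close> by auto
    ultimately show ?thesis using Reg M by auto
  qed
  show "\<forall>i<length ks. \<forall>k. elem_step (cplx ks i) (cplx ks (Suc i)) k \<longleftrightarrow> k = ks!i"
    using step step_unique by blast
  show "morse_sequence K (seqc ks)"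
    unfolding morse_sequence_def
  proof (intro conjI allI impI ballI)
    show "seqc ks \<noteq> []" using seqc_len[of ks] by auto
    have "hd (seqc ks) = seqc ks ! 0" using \<open>seqc ks \<noteq> []\<close> by (simp add: hd_conv_nth)
    then show "hd (seqc ks) = {}" by (simp add: seqc_nth cplx_0 del: seqc_def)
    show "last (seqc ks) = K" by (simp add: seqc_def cplx_len U)
  next
    fix L assume "L \<in> set (seqc ks)" then show "simplicial_complex L" using scn by (auto simp: seqc_def)
  next
    fix i assume "0 < i \<and> i < length (seqc ks)"
    then have i: "i - 1 < length ks" "i = Suc (i - 1)" using seqc_len[of ks] by auto
    have "seqc ks ! (i - 1) = cplx ks (i - 1)" "seqc ks ! i = cplx ks i"
      using i seqc_nth[of _ ks] by (metis Suc_leI less_imp_le_nat)+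
    then show "\<exists>k. elem_step (seqc ks ! (i - 1)) (seqc ks ! i) k" using step[OF i(1)] i(2) by metis
  qed
qed

lemma good_regular:
  assumes sc: "simplicial_complex K" and g: "good K ks"
  shows "regular_pairs (seqc ks) = {(\<sigma>, \<tau>). Reg \<sigma> \<tau> \<in> set ks}"
proof -
  have u: "\<forall>i<length ks. \<forall>k. elem_step (cplx ks i) (cplx ks (Suc i)) k \<longleftrightarrow> k = ks!i"
    using good_valid(2)[OF sc g] .
  have e: "(\<exists>i. 0 < i \<and> i < length (seqc ks) \<and> elem_step (seqc ks ! (i - 1)) (seqc ks ! i) k)
      \<longleftrightarrow> k \<in> set ks" for k
  proof
    assume "\<exists>i. 0 < i \<and> i < length (seqc ks) \<and> elem_step (seqc ks ! (i - 1)) (seqc ks ! i) k"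
    then obtain i where i: "0 < i" "i < length (seqc ks)" "elem_step (seqc ks ! (i - 1)) (seqc ks ! i) k" by blast
    then have j: "i - 1 < length ks" "i = Suc (i - 1)" using seqc_len[of ks] by auto
    have "seqc ks ! (i - 1) = cplx ks (i - 1)" "seqc ks ! i = cplx ks i"
      using j seqc_nth[of _ ks] by (metis Suc_leI less_imp_le_nat)+
    then have "k = ks ! (i - 1)" using u j i(3) by metis
    then show "k \<in> set ks" using j by simp
  next
    assume "k \<in> set ks"
    then obtain j where j: "j < length ks" "ks!j = k" by (auto simp: in_set_conv_nth)
    have "seqc ks ! j = cplx ks j" "seqc ks ! Suc j = cplx ks (Suc j)"
      using j seqc_nth[of _ ks] by auto
    then have "elem_step (seqc ks ! (Suc j - 1)) (seqc ks ! Suc j) k" using u j by simp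
    then show "\<exists>i. 0 < i \<and> i < length (seqc ks) \<and> elem_step (seqc ks ! (i - 1)) (seqc ks ! i) k"
      using j seqc_len[of ks] by (intro exI[of _ "Suc j"]) auto
  qed
  show ?thesis unfolding regular_pairs_def
  proof (intro set_eqI)
    fix p :: "'a set \<times> 'a set"
    obtain a b where p: "p = (a, b)" by (cases p)
    show "p \<in> {(\<sigma>, \<tau>). \<exists>i. 0 < i \<and> i < length (seqc ks) \<and> elem_step (seqc ks ! (i - 1)) (seqc ks ! i) (Reg \<sigma> \<tau>)}
      \<longleftrightarrow> p \<in> {(\<sigma>, \<tau>). Reg \<sigma> \<tau> \<in> set ks}"
      unfolding p using e[of "Reg a b"] by simp
  qed
qed

definition perm_of :: "'a kappa list \<Rightarrow> nat list" where
  "perm_of ks = sort_key (\<lambda>i. (skey (ks!i), i)) [0..<length ks]"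

definition arr :: "'a kappa list \<Rightarrow> 'a kappa list" where
  "arr ks = map (\<lambda>i. ks!i) (perm_of ks)"

lemma perm_len: "length (perm_of ks) = length ks" unfolding perm_of_def by simp
lemma perm_dist: "distinct (perm_of ks)" unfolding perm_of_def by (simp add: distinct_sort)
lemma perm_set: "set (perm_of ks) = {0..<length ks}" unfolding perm_of_def by simp
lemma perm_sorted: "sorted (map (\<lambda>i. (skey (ks!i), i)) (perm_of ks))"
  unfolding perm_of_def by (rule sorted_sort_key)

lemma perm_le:
  assumes "i \<le> j" "j < length ks"
  shows "(skey (ks!(perm_of ks!i)), perm_of ks!i) \<le> (skey (ks!(perm_of ks!j)), perm_of ks!j)"
proof -
  have L: "j < length (map (\<lambda>i. (skey (ks!i), i)) (perm_of ks))" using assms(2) perm_len[of ks] by simp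
  have "map (\<lambda>i. (skey (ks!i), i)) (perm_of ks) ! i \<le> map (\<lambda>i. (skey (ks!i), i)) (perm_of ks) ! j"
    using sorted_nth_mono[OF perm_sorted[of ks] assms(1) L] .
  then show ?thesis using assms perm_len[of ks] by simp
qed

lemma perm_lt:
  assumes "i < j" "j < length ks"
  shows "(skey (ks!(perm_of ks!i)), perm_of ks!i) < (skey (ks!(perm_of ks!j)), perm_of ks!j)"
proof -
  have "perm_of ks!i \<noteq> perm_of ks!j" using assms perm_dist[of ks] perm_len[of ks]
    by (simp add: nth_eq_iff_index_eq)
  then show ?thesis using perm_le[of i j ks] assms by (auto simp: less_le)
qed

lemma arr_len: "length (arr ks) = length ks" unfolding arr_def by (simp add: perm_len)
lemma arr_nth: "i < length ks \<Longrightarrow> arr ks ! i = ks ! (perm_of ks ! i)"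
  unfolding arr_def by (simp add: perm_len)
lemma arr_set: "set (arr ks) = set ks"
proof -
  have "set (arr ks) = (\<lambda>i. ks!i) ` {0..<length ks}" unfolding arr_def by (simp add: perm_set)
  also have "\<dots> = set ks" by (auto simp: in_set_conv_nth)
  finally show ?thesis .
qed
lemma perm_lt_len: "i < length ks \<Longrightarrow> perm_of ks ! i < length ks"
  using perm_set[of ks] perm_len[of ks] nth_mem by fastforce

lemma key_le:
  assumes wf: "\<And>\<sigma> \<tau>. Reg \<sigma> \<tau> \<in> {\<kappa>, \<kappa>'} \<Longrightarrow> \<sigma> \<subset> \<tau> \<and> card \<tau> = Suc (card \<sigma>)"
    and fin: "\<And>z. z \<in> elems \<kappa> \<Longrightarrow> finite z"
    and x: "x \<in> elems \<kappa>" and y: "y \<subset> x" "y \<in> elems \<kappa>'"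
  shows "skey \<kappa>' \<le> skey \<kappa>"
proof -
  have c: "card y < card x" using psubset_card_mono[OF fin[OF x] y(1)] .
  show ?thesis
  proof (cases \<kappa>)
    case (Crit \<nu>)
    then show ?thesis using c x y wf by (cases \<kappa>') auto
  next
    case (Reg \<sigma> \<tau>)
    then have "card x \<le> card \<tau>" using x wf[of \<sigma> \<tau>] by auto
    then have cy: "card y < card \<tau>" using c by simp
    show ?thesis
    proof (cases \<kappa>')
      case (Crit c)
      then show ?thesis using Reg cy y by simp
    next
      case (Reg s t)
      have "card t = Suc (card s)" using wf[of s t] Reg by simp
      moreover have "y = s \<or> y = t" using y Reg by simp
      ultimately show ?thesis using Reg \<open>\<kappa> = Reg \<sigma> \<tau>\<close> cy by auto
    qed
  qed
qed

lemma good_arr: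
  assumes sc: "simplicial_complex K" and g: "good K ks"
  shows "good K (arr ks)"
proof -
  have G: "(\<forall>i<length ks. \<forall>j<length ks. i \<noteq> j \<longrightarrow> elems (ks!i) \<inter> elems (ks!j) = {}) \<and>
   (\<forall>\<sigma> \<tau>. Reg \<sigma> \<tau> \<in> set ks \<longrightarrow> \<sigma> \<subset> \<tau> \<and> card \<tau> = Suc (card \<sigma>)) \<and>
   (\<forall>i<length ks. \<forall>x\<in>elems (ks!i). \<forall>y. y \<subseteq> x \<and> y \<noteq> {} \<longrightarrow> (\<exists>j\<le>i. y \<in> elems (ks!j))) \<and>
   \<Union>(elems ` set ks) = K" using g unfolding good_def by assumption
  have P1: "\<And>i j. i<length ks \<Longrightarrow> j<length ks \<Longrightarrow> i \<noteq> j \<Longrightarrow> elems (ks!i) \<inter> elems (ks!j) = {}"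
    using G[THEN conjunct1] by blast
  have P3: "\<And>\<sigma> \<tau>. Reg \<sigma> \<tau> \<in> set ks \<Longrightarrow> \<sigma> \<subset> \<tau> \<and> card \<tau> = Suc (card \<sigma>)"
    using G[THEN conjunct2, THEN conjunct1] by blast
  have P4: "\<And>i x y. i<length ks \<Longrightarrow> x\<in>elems (ks!i) \<Longrightarrow> y \<subseteq> x \<Longrightarrow> y \<noteq> {} \<Longrightarrow> (\<exists>j\<le>i. y \<in> elems (ks!j))"
    using G[THEN conjunct2, THEN conjunct2, THEN conjunct1] by blast
  have U: "\<Union>(elems ` set ks) = K"
    using G[THEN conjunct2, THEN conjunct2, THEN conjunct2] by blast
  have Kfin: "\<And>x. x \<in> K \<Longrightarrow> finite x" using sc unfolding simplicial_complex_def by blast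
  let ?p = "perm_of ks"
  let ?n = "length ks"
  have Q1: "\<forall>i<length (arr ks). \<forall>j<length (arr ks). i \<noteq> j \<longrightarrow> elems (arr ks!i) \<inter> elems (arr ks!j) = {}"
  proof (intro allI impI)
    fix i j assume ij: "i < length (arr ks)" "j < length (arr ks)" "i \<noteq> j"
    then have "?p!i \<noteq> ?p!j" using perm_dist[of ks] perm_len[of ks] arr_len[of ks]
      by (simp add: nth_eq_iff_index_eq)
    then show "elems (arr ks!i) \<inter> elems (arr ks!j) = {}"
      using P1[of "?p!i" "?p!j"] ij arr_len[of ks] arr_nth[of i ks] arr_nth[of j ks]
        perm_lt_len[of i ks] perm_lt_len[of j ks] by simp
  qed
  have Q4: "\<forall>i<length (arr ks). \<forall>x\<in>elems (arr ks!i). \<forall>y. y \<subseteq> x \<and> y \<noteq> {} \<longrightarrow> (\<exists>j\<le>i. y \<in> elems (arr ks!j))"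
  proof (intro allI impI ballI)
    fix i x y assume i: "i < length (arr ks)" and x: "x \<in> elems (arr ks!i)" and y: "y \<subseteq> x \<and> y \<noteq> {}"
    have i': "i < ?n" using i arr_len[of ks] by simp
    define b where "b = ?p!i"
    have b: "b < ?n" "arr ks ! i = ks!b" using i' perm_lt_len arr_nth unfolding b_def by auto
    have xb: "x \<in> elems (ks!b)" using x b(2) by simp
    obtain a where a: "a \<le> b" "y \<in> elems (ks!a)" using P4[OF b(1) xb] y by blast
    have an: "a < ?n" using a b by simp
    then have "a \<in> set ?p" using perm_set[of ks] by simp
    then obtain j where j: "j < ?n" "?p!j = a" using perm_len[of ks] by (auto simp: in_set_conv_nth)
    have "j \<le> i"
    proof (rule ccontr)
      assume "\<not> j \<le> i"
      then have lt: "(skey (ks!b), b) < (skey (ks!a), a)" using perm_lt[of i j ks] j b_def by simp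
      have "a \<noteq> b" using lt by auto
      then have ab: "a < b" using a by simp
      have "x \<in> elems (ks!b)" using x b by simp
      have "y \<noteq> x"
      proof
        assume "y = x"
        then have "x \<in> elems (ks!a) \<inter> elems (ks!b)" using a(2) xb by simp
        then show False using P1[of a b] ab b an by simp
      qed
      then have yx: "y \<subset> x" using y by auto
      have fin: "\<And>z. z \<in> elems (ks!b) \<Longrightarrow> finite z" using U Kfin b nth_mem by blast
      have wf: "\<sigma> \<subset> \<tau> \<and> card \<tau> = Suc (card \<sigma>)" if "Reg \<sigma> \<tau> \<in> {ks!b, ks!a}" for \<sigma> \<tau>
      proof -
        have "Reg \<sigma> \<tau> \<in> set ks" using that b an by auto
        then show ?thesis by (rule P3)
      qed
      have "skey (ks!a) \<le> skey (ks!b)"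
        using key_le[OF wf fin \<open>x \<in> elems (ks!b)\<close> yx a(2)] .
      then show False using lt ab by auto
    qed
    moreover have "arr ks ! j = ks ! a" using arr_nth[of j ks] j by simp
    ultimately show "\<exists>j\<le>i. y \<in> elems (arr ks!j)" using a(2) by auto
  qed
  show ?thesis unfolding good_def using Q1 Q4 P3 U arr_set[of ks] by simp
qed

lemma kdim_skey: "kdim k = skey k div 2 - 1"
  by (cases k) (simp_all add: sdim_def)

lemma kdim_le:
  assumes le: "skey k \<le> skey k'" and ne: "\<And>z. z \<in> elems k \<union> elems k' \<Longrightarrow> finite z \<and> z \<noteq> {}"
  shows "kdim k \<le> kdim k' \<and> (is_Crit k \<and> is_Reg k' \<longrightarrow> kdim k < kdim k')"
proof
  show "kdim k \<le> kdim k'" unfolding kdim_skey using le by (simp add: div_le_mono diff_le_mono)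
  show "is_Crit k \<and> is_Reg k' \<longrightarrow> kdim k < kdim k'"
  proof
    assume c: "is_Crit k \<and> is_Reg k'"
    then obtain a s t where k: "k = Crit a" and k': "k' = Reg s t" by (cases k; cases k') auto
    have "finite a" "a \<noteq> {}" using ne[of a] k by auto
    then have a0: "card a > 0" by (simp add: card_gt_0_iff)
    have "2 * card a + 1 \<le> 2 * card t" using le k k' by simp
    then have "card a < card t" by simp
    then show "kdim k < kdim k'" using a0 k k' by (simp add: sdim_def)
  qed
qed

lemma arranged_arr:
  assumes sc: "simplicial_complex K" and g: "good K ks"
  shows "arranged (seqc (arr ks))"
  unfolding arranged_def
proof (intro allI impI)
  fix i k k'
  assume A: "0 < i \<and> i + 1 < length (seqc (arr ks)) \<and>
      elem_step (seqc (arr ks) ! (i - 1)) (seqc (arr ks) ! i) k \<and>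
      elem_step (seqc (arr ks) ! i) (seqc (arr ks) ! (i + 1)) k'"
  have ga: "good K (arr ks)" using good_arr[OF sc g] .
  have u: "\<forall>i<length (arr ks). \<forall>k. elem_step (cplx (arr ks) i) (cplx (arr ks) (Suc i)) k \<longleftrightarrow> k = arr ks!i"
    using good_valid(2)[OF sc ga] .
  have n: "length (arr ks) = length ks" by (rule arr_len)
  have i: "i < length ks" "i - 1 < length ks" "Suc (i - 1) = i" using A seqc_len[of "arr ks"] n by auto
  have e1: "seqc (arr ks) ! (i - 1) = cplx (arr ks) (i - 1)" using i n seqc_nth[of "i - 1" "arr ks"] by simp
  have e2: "seqc (arr ks) ! i = cplx (arr ks) i" using i n seqc_nth[of i "arr ks"] by simp
  have e3: "seqc (arr ks) ! (i + 1) = cplx (arr ks) (Suc i)" using i n seqc_nth[of "Suc i" "arr ks"] by simp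
  have A3: "elem_step (seqc (arr ks) ! (i - 1)) (seqc (arr ks) ! i) k" using A by blast
  have s1: "elem_step (cplx (arr ks) (i - 1)) (cplx (arr ks) (Suc (i - 1))) k"
    using A3 unfolding e1 e2 i(3) .
  have A4: "elem_step (seqc (arr ks) ! i) (seqc (arr ks) ! (i + 1)) k'" using A by blast
  have s2: "elem_step (cplx (arr ks) i) (cplx (arr ks) (Suc i)) k'" using A4 unfolding e2 e3 .
  have l1: "i - 1 < length (arr ks)" "i < length (arr ks)" using i n by simp_all
  have kk: "k = arr ks ! (i - 1)" using u[rule_format, OF l1(1)] s1 by blast
  have kk': "k' = arr ks ! i" using u[rule_format, OF l1(2)] s2 by blast
  have "(skey (ks!(perm_of ks!(i - 1))), perm_of ks!(i - 1)) \<le> (skey (ks!(perm_of ks!i)), perm_of ks!i)"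
    using perm_le[of "i - 1" i ks] i by simp
  then have "skey (ks!(perm_of ks!(i - 1))) \<le> skey (ks!(perm_of ks!i))" by auto
  then have le: "skey k \<le> skey k'" using kk kk' arr_nth[of i ks] arr_nth[of "i - 1" ks] i by simp
  have U: "\<Union>(elems ` set (arr ks)) = K" using ga unfolding good_def by blast
  have Kne: "\<And>x. x \<in> K \<Longrightarrow> finite x \<and> x \<noteq> {}" using sc unfolding simplicial_complex_def by blast
  have "k \<in> set (arr ks)" "k' \<in> set (arr ks)" using kk kk' i n by auto
  then have "\<And>z. z \<in> elems k \<union> elems k' \<Longrightarrow> finite z \<and> z \<noteq> {}" using U Kne by blast
  then show "kdim k \<le> kdim k' \<and> (is_Crit k \<and> is_Reg k' \<longrightarrow> kdim k < kdim k')"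
    using kdim_le[OF le] by blast
qed

theorem theorem5:
  fixes K :: "'a set set" and W :: "'a set set list"
  assumes "simplicial_complex K"
    and "morse_sequence K W"
  shows "\<exists>V. morse_sequence K V \<and> arranged V \<and> equivalent_morse W V"
proof -
  obtain ks where W: "W = seqc ks" and st: "\<forall>i<length ks. elem_step (cplx ks i) (cplx ks (Suc i)) (ks!i)"
    using extract_steps[OF assms(2)] by blast
  have g: "good K ks" using good_of[OF assms(1) _ st] assms(2) W by simp
  have ga: "good K (arr ks)" using good_arr[OF assms(1) g] .
  have "regular_pairs W = {(\<sigma>, \<tau>). Reg \<sigma> \<tau> \<in> set ks}" using W good_regular[OF assms(1) g] by simp
  also have "\<dots> = regular_pairs (seqc (arr ks))" using good_regular[OF assms(1) ga] arr_set[of ks] by simp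
  finally have "equivalent_morse W (seqc (arr ks))" unfolding equivalent_morse_def .
  then show ?thesis using good_valid(1)[OF assms(1) ga] arranged_arr[OF assms(1) g] by blast
qed

end
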